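(* Let $\varepsilon>0$. There exists $C(\varepsilon)>0$ such that if $Cn^{-1/2}\le p$ and $p=o(1)$, then a.a.s. $G(n,p)$ contains a spanning subgraph of minimum degree at least $(1-\varepsilon)np$ in which $\Omega(p^{-2})$ vertices are not contained in any triangle.
   Context: $G(n,p)$ is the binomial random graph on $n$ vertices; a.a.s. means with probability tending to $1$ as $n\to\infty$. "$\Omega(p^{-2})$ vertices" means at least $cp^{-2}$ vertices for some constant $c>0$ not depending on $n$. *)

theory Defs
  imports "HOL-Probability.Probability"
begin

text \<open>Graphs on vertex set {0..<n}: an edge set is a set of 2-element subsets of {..<n}.\<close>

definition vpairs :: "nat \<Rightarrow> nat set set" where
  "vpairs n = {{i, j} | i j. i < j \<and> j < n}"

definition Gnp :: "nat \<Rightarrow> real \<Rightarrow> nat set set pmf" where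
  "Gnp n p = map_pmf (\<lambda>f. {e \<in> vpairs n. f e})
                     (Pi_pmf (vpairs n) False (\<lambda>_. bernoulli_pmf p))"

definition degree :: "nat set set \<Rightarrow> nat \<Rightarrow> nat" where
  "degree E v = card {u. {u, v} \<in> E}"

definition in_triangle :: "nat set set \<Rightarrow> nat \<Rightarrow> bool" where
  "in_triangle E v \<longleftrightarrow> (\<exists>u w. u \<noteq> v \<and> w \<noteq> v \<and> u \<noteq> w \<and>
      {u, v} \<in> E \<and> {v, w} \<in> E \<and> {u, w} \<in> E)"

end

theory Submission
  imports Defs "HOL-Real_Asymp.Real_Asymp"
begin


abbreviation OM :: "'a set \<Rightarrow> real \<Rightarrow> ('a \<Rightarrow> bool) pmf" where
  "OM I p \<equiv> Pi_pmf I False (\<lambda>_. bernoulli_pmf p)"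

lemma exp_card_prod:
  assumes "finite I" "J \<subseteq> I"
  shows "exp (t * real (card {e\<in>J. f e})) = (\<Prod>e\<in>I. (if e \<in> J \<and> f e then exp t else 1))"
proof -
  have fJ: "finite J" using assms finite_subset by blast
  have "real (card {e\<in>J. f e}) = (\<Sum>e\<in>J. if f e then 1 else 0)"
    using fJ by (simp add: sum.If_cases Int_def)
  hence "exp (t * real (card {e\<in>J. f e})) = (\<Prod>e\<in>J. exp (t * (if f e then 1 else 0)))"
    by (simp add: sum_distrib_left exp_sum fJ)
  also have "\<dots> = (\<Prod>e\<in>J. (if e \<in> J \<and> f e then exp t else 1))"
    by (intro prod.cong) auto
  also have "\<dots> = (\<Prod>e\<in>I. (if e \<in> J \<and> f e then exp t else 1))"
    using assms by (intro prod.mono_neutral_left) auto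
  finally show ?thesis .
qed

lemma exp_moment:
  assumes "finite I" "J \<subseteq> I" "0 \<le> p" "p \<le> 1"
  shows "measure_pmf.expectation (OM I p) (\<lambda>f. exp (t * real (card {e\<in>J. f e})))
         = (1 - p + p * exp t) ^ card J"
proof -
  have "measure_pmf.expectation (OM I p) (\<lambda>f. exp (t * real (card {e\<in>J. f e})))
     = measure_pmf.expectation (OM I p) (\<lambda>f. \<Prod>e\<in>I. (\<lambda>e b. if e \<in> J \<and> b then exp t else 1) e (f e))"
    using assms by (simp add: exp_card_prod)
  also have "\<dots> = (\<Prod>e\<in>I. measure_pmf.expectation (bernoulli_pmf p) (\<lambda>b. if e \<in> J \<and> b then exp t else 1))"
    by (rule expectation_prod_Pi_pmf) (use assms in \<open>auto intro: integrable_measure_pmf_finite\<close>)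
  also have "\<dots> = (\<Prod>e\<in>I. if e \<in> J then 1 - p + p * exp t else 1)"
    using assms by (intro prod.cong) (auto simp: integral_bernoulli_pmf)
  also have "\<dots> = (\<Prod>e\<in>J. 1 - p + p * exp t)"
    using assms by (subst prod.If_cases) (auto simp: Int_absorb1)
  finally show ?thesis by simp
qed

lemma markov_exp:
  fixes u :: "('a \<Rightarrow> bool) \<Rightarrow> real"
  assumes "\<And>f. 0 \<le> u f" "finite I" "0 < c"
  shows "measure_pmf.prob (OM I p) {f. c \<le> u f} \<le> measure_pmf.expectation (OM I p) u / c"
proof -
  have fin: "finite (set_pmf (OM I p))"
    using assms(2) by (subst set_Pi_pmf) (auto intro!: finite_PiE_dflt)
  have "integrable (measure_pmf (OM I p)) u"
    by (rule integrable_measure_pmf_finite[OF fin])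
  from integral_Markov_inequality_measure[OF this, of "{}" c] assms show ?thesis by simp
qed

lemma chernoff_upper:
  assumes "finite I" "J \<subseteq> I" "0 \<le> p" "p \<le> 1" "0 \<le> t"
  shows "measure_pmf.prob (OM I p) {f. a \<le> real (card {e\<in>J. f e})}
           \<le> exp (- t * a + p * real (card J) * (exp t - 1))"
proof -
  let ?u = "\<lambda>f. exp (t * real (card {e\<in>J. f e}))"
  have "{f. a \<le> real (card {e\<in>J. f e})} \<subseteq> {f. exp (t*a) \<le> ?u f}"
    using assms(5) by (auto intro!: mult_left_mono)
  hence "measure_pmf.prob (OM I p) {f. a \<le> real (card {e\<in>J. f e})} \<le> measure_pmf.prob (OM I p) {f. exp (t*a) \<le> ?u f}"
    by (intro measure_pmf.finite_measure_mono) auto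
  also have "\<dots> \<le> measure_pmf.expectation (OM I p) ?u / exp (t*a)"
    by (rule markov_exp) (use assms in auto)
  also have "\<dots> = (1 - p + p * exp t) ^ card J / exp (t*a)"
    using exp_moment[OF assms(1-4)] by simp
  also have "\<dots> \<le> exp (p * (exp t - 1)) ^ card J / exp (t*a)"
  proof -
    have "0 \<le> 1 - p + p * exp t" using assms by (simp add: add_nonneg_nonneg)
    moreover have "1 - p + p * exp t \<le> exp (p * (exp t - 1))"
      using exp_ge_add_one_self[of "p * (exp t - 1)"] by (simp add: algebra_simps)
    ultimately show ?thesis by (intro divide_right_mono power_mono) auto
  qed
  also have "\<dots> = exp (- t * a + p * real (card J) * (exp t - 1))"
    by (simp add: exp_of_nat_mult[symmetric] exp_diff[symmetric] algebra_simps flip: exp_of_nat_mult)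
  finally show ?thesis .
qed

lemma chernoff_lower:
  assumes "finite I" "J \<subseteq> I" "0 \<le> p" "p \<le> 1" "0 \<le> t"
  shows "measure_pmf.prob (OM I p) {f. real (card {e\<in>J. f e}) \<le> a}
           \<le> exp (t * a - p * real (card J) * (1 - exp (-t)))"
proof -
  let ?u = "\<lambda>f. exp ((-t) * real (card {e\<in>J. f e}))"
  have "{f. real (card {e\<in>J. f e}) \<le> a} \<subseteq> {f. exp (-t*a) \<le> ?u f}"
    using assms(5) by (auto intro!: mult_left_mono)
  hence "measure_pmf.prob (OM I p) {f. real (card {e\<in>J. f e}) \<le> a} \<le> measure_pmf.prob (OM I p) {f. exp (-t*a) \<le> ?u f}"
    by (intro measure_pmf.finite_measure_mono) auto
  also have "\<dots> \<le> measure_pmf.expectation (OM I p) ?u / exp (-t*a)"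
    by (rule markov_exp) (use assms in auto)
  also have "\<dots> = (1 - p + p * exp (-t)) ^ card J / exp (-t*a)"
    using exp_moment[OF assms(1-4), of "-t"] by (simp only:)
  also have "\<dots> \<le> exp (p * (exp (-t) - 1)) ^ card J / exp (-t*a)"
  proof -
    have "0 \<le> 1 - p + p * exp (-t)" using assms by (simp add: add_nonneg_nonneg)
    moreover have "1 - p + p * exp (-t) \<le> exp (p * (exp (-t) - 1))"
      using exp_ge_add_one_self[of "p * (exp (-t) - 1)"] by (simp add: algebra_simps)
    ultimately show ?thesis by (intro divide_right_mono power_mono) auto
  qed
  also have "\<dots> = exp (t * a - p * real (card J) * (1 - exp (-t)))"
    by (simp add: exp_diff[symmetric] algebra_simps flip: exp_of_nat_mult)
  finally show ?thesis .
qed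

lemma exp_moment2:
  assumes "finite I" "J \<subseteq> I" "0 \<le> p" "p \<le> 1" "e0 \<in> I" "e0 \<notin> J"
  shows "measure_pmf.expectation (OM I p) (\<lambda>f. (if f e0 then 1 else 0) * exp (t * real (card {e\<in>J. f e})))
         = p * (1 - p + p * exp t) ^ card J"
proof -
  have JJ: "(I - {e0}) \<inter> J = J" using assms by auto
  let ?g = "\<lambda>e b. if e = e0 then (if b then 1 else 0) else if e \<in> J \<and> b then exp t else (1::real)"
  have eq: "(if f e0 then 1 else 0) * exp (t * real (card {e\<in>J. f e})) = (\<Prod>e\<in>I. ?g e (f e))" for f
  proof -
    have "(\<Prod>e\<in>I. ?g e (f e)) = ?g e0 (f e0) * (\<Prod>e\<in>I - {e0}. ?g e (f e))"
      using assms by (simp add: prod.remove)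
    also have "(\<Prod>e\<in>I - {e0}. ?g e (f e)) = (\<Prod>e\<in>I - {e0}. (if e \<in> J \<and> f e then exp t else 1))"
      by (intro prod.cong) auto
    also have "\<dots> = exp (t * real (card {e\<in>J. f e}))"
      using assms by (intro exp_card_prod[symmetric]) auto
    finally show ?thesis by simp
  qed
  have "measure_pmf.expectation (OM I p) (\<lambda>f. (if f e0 then 1 else 0) * exp (t * real (card {e\<in>J. f e})))
     = measure_pmf.expectation (OM I p) (\<lambda>f. \<Prod>e\<in>I. ?g e (f e))"
    by (simp only: eq)
  also have "\<dots> = (\<Prod>e\<in>I. measure_pmf.expectation (bernoulli_pmf p) (?g e))"
    by (rule expectation_prod_Pi_pmf) (use assms in \<open>auto intro: integrable_measure_pmf_finite\<close>)
  also have "\<dots> = (\<Prod>e\<in>I. if e = e0 then p else if e \<in> J then 1 - p + p * exp t else 1)"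
    using assms by (intro prod.cong) (auto simp: integral_bernoulli_pmf)
  also have "\<dots> = p * (\<Prod>e\<in>I - {e0}. if e \<in> J then 1 - p + p * exp t else 1)"
    using assms by (simp add: prod.remove)
  also have "(\<Prod>e\<in>I - {e0}. if e \<in> J then 1 - p + p * exp t else 1) = (\<Prod>e\<in>J. 1 - p + p * exp t)"
    using assms JJ by (subst prod.If_cases) (auto intro!: prod.cong)
  finally show ?thesis by simp
qed

lemma chernoff_upper2:
  assumes "finite I" "J \<subseteq> I" "0 \<le> p" "p \<le> 1" "0 \<le> t" "e0 \<in> I" "e0 \<notin> J"
  shows "measure_pmf.prob (OM I p) {f. f e0 \<and> a \<le> real (card {e\<in>J. f e})}
           \<le> p * exp (- t * a + p * real (card J) * (exp t - 1))"
proof -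
  let ?u = "\<lambda>f. (if f e0 then 1 else 0) * exp (t * real (card {e\<in>J. f e}))"
  have "{f. f e0 \<and> a \<le> real (card {e\<in>J. f e})} \<subseteq> {f. exp (t*a) \<le> ?u f}"
    using assms(5) by (auto intro!: mult_left_mono)
  hence "measure_pmf.prob (OM I p) {f. f e0 \<and> a \<le> real (card {e\<in>J. f e})} \<le> measure_pmf.prob (OM I p) {f. exp (t*a) \<le> ?u f}"
    by (intro measure_pmf.finite_measure_mono) auto
  also have "\<dots> \<le> measure_pmf.expectation (OM I p) ?u / exp (t*a)"
    by (rule markov_exp) (use assms in auto)
  also have "\<dots> = p * (1 - p + p * exp t) ^ card J / exp (t*a)"
    using exp_moment2[OF assms(1-4,6,7)] by (simp only:)
  also have "\<dots> \<le> p * exp (p * (exp t - 1)) ^ card J / exp (t*a)"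
  proof -
    have "0 \<le> 1 - p + p * exp t" using assms by (simp add: add_nonneg_nonneg)
    moreover have "1 - p + p * exp t \<le> exp (p * (exp t - 1))"
      using exp_ge_add_one_self[of "p * (exp t - 1)"] by (simp add: algebra_simps)
    ultimately show ?thesis using assms by (intro divide_right_mono mult_left_mono power_mono) auto
  qed
  also have "\<dots> = p * (exp (p * (exp t - 1)) ^ card J / exp (t*a))" by simp
  also have "exp (p * (exp t - 1)) ^ card J / exp (t*a) = exp (- t * a + p * real (card J) * (exp t - 1))"
    by (simp add: exp_diff[symmetric] algebra_simps flip: exp_of_nat_mult)
  finally show ?thesis .
qed

lemma prob_bind_le:
  assumes "\<And>x. x \<in> set_pmf M \<Longrightarrow> measure_pmf.prob (N x) X \<le> B"
  shows "measure_pmf.prob (bind_pmf M N) X \<le> B"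
proof -
  obtain x0 where x0: "x0 \<in> set_pmf M" using set_pmf_not_empty[of M] by blast
  have B0: "0 \<le> B" using assms[OF x0] measure_nonneg order_trans by blast
  have "emeasure (measure_pmf (bind_pmf M N)) X = (\<integral>\<^sup>+x. emeasure (N x) X \<partial>M)"
    by simp
  also have "\<dots> \<le> (\<integral>\<^sup>+x. ennreal B \<partial>M)"
    by (intro nn_integral_mono_AE AE_pmfI) (auto simp: measure_pmf.emeasure_eq_measure intro!: ennreal_leI assms)
  also have "\<dots> = ennreal B"
    by (simp add: measure_pmf.emeasure_space_1)
  finally show ?thesis
    using B0 by (simp add: measure_pmf.emeasure_eq_measure)
qed

lemma map_pair_bind:
  "map_pmf F (pair_pmf A B) = bind_pmf A (\<lambda>x. map_pmf (\<lambda>y. F (x, y)) B)"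
  by (simp add: pair_pmf_def map_pmf_def bind_assoc_pmf bind_return_pmf)

lemma cond_bound:
  fixes P :: "('a \<Rightarrow> bool) \<Rightarrow> 'a set" and Q :: "('a \<Rightarrow> bool) \<Rightarrow> bool"
  assumes fin: "finite U" "finite R" "U \<inter> R = {}"
    and dep: "\<And>f g. (\<forall>e\<in>U. f e = g e) \<Longrightarrow> P f = P g \<and> (Q f \<longleftrightarrow> Q g)"
    and PQ: "\<And>f. Q f \<Longrightarrow> P f \<subseteq> R \<and> real (card (P f)) \<le> M"
    and p: "0 \<le> p" "p \<le> 1" and t: "0 \<le> t"
  shows "measure_pmf.prob (OM (U \<union> R) p) {f. Q f \<and> a \<le> real (card {e\<in>P f. f e})}
           \<le> exp (- t * a + p * M * (exp t - 1))"
proof -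
  let ?mg = "\<lambda>g h x. if x \<in> U then g x else h x"
  have "OM (U \<union> R) p = map_pmf (\<lambda>(g, h). ?mg g h) (pair_pmf (OM U p) (OM R p))"
    using fin by (rule Pi_pmf_union)
  also have "\<dots> = bind_pmf (OM U p) (\<lambda>g. map_pmf (\<lambda>h. ?mg g h) (OM R p))"
    by (simp add: map_pair_bind)
  finally have eq: "OM (U \<union> R) p = \<dots>" .
  have et: "0 \<le> exp t - 1" using t by simp
  show ?thesis unfolding eq
  proof (rule prob_bind_le)
    fix g
    define gg where "gg = ?mg g (\<lambda>_. False)"
    have agree: "\<forall>e\<in>U. ?mg g h e = gg e" for h by (auto simp: gg_def)
    have key: "{e\<in>S. ?mg g h e} = {e\<in>S. h e}" if "S \<subseteq> R" for S h
      using that fin(3) by auto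
    have "measure_pmf.prob (map_pmf (?mg g) (OM R p)) {f. Q f \<and> a \<le> real (card {e\<in>P f. f e})}
        = measure_pmf.prob (OM R p) {h. Q gg \<and> a \<le> real (card {e\<in>P gg. h e})}"
    proof -
      have "?mg g -` {f. Q f \<and> a \<le> real (card {e\<in>P f. f e})} = {h. Q gg \<and> a \<le> real (card {e\<in>P gg. h e})}"
      proof (intro set_eqI iffI)
        fix h assume "h \<in> ?mg g -` {f. Q f \<and> a \<le> real (card {e\<in>P f. f e})}"
        hence q: "Q (?mg g h)" and c: "a \<le> real (card {e\<in>P (?mg g h). ?mg g h e})" by auto
        have P1: "P (?mg g h) = P gg" and Q1: "Q (?mg g h) = Q gg" using dep[OF agree[of h]] by auto
        have "P gg \<subseteq> R" using PQ q Q1 by auto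
        hence "{e\<in>P (?mg g h). ?mg g h e} = {e\<in>P gg. h e}" unfolding P1 by (rule key)
        thus "h \<in> {h. Q gg \<and> a \<le> real (card {e\<in>P gg. h e})}" using q Q1 c by auto
      next
        fix h assume "h \<in> {h. Q gg \<and> a \<le> real (card {e\<in>P gg. h e})}"
        hence q: "Q gg" and c: "a \<le> real (card {e\<in>P gg. h e})" by auto
        have P1: "P (?mg g h) = P gg" and Q1: "Q (?mg g h) = Q gg" using dep[OF agree[of h]] by auto
        have "P gg \<subseteq> R" using PQ q by auto
        hence "{e\<in>P (?mg g h). ?mg g h e} = {e\<in>P gg. h e}" unfolding P1 by (rule key)
        thus "h \<in> ?mg g -` {f. Q f \<and> a \<le> real (card {e\<in>P f. f e})}" using q Q1 c by auto
      qed
      thus ?thesis by simp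
    qed
    also have "\<dots> \<le> exp (- t * a + p * M * (exp t - 1))"
    proof (cases "Q gg")
      case False thus ?thesis by simp
    next
      case True
      have sub: "P gg \<subseteq> R" and cM: "real (card (P gg)) \<le> M" using PQ[OF True] by auto
      have "measure_pmf.prob (OM R p) {h. Q gg \<and> a \<le> real (card {e\<in>P gg. h e})}
          = measure_pmf.prob (OM R p) {h. a \<le> real (card {e\<in>P gg. h e})}" using True by simp
      also have "\<dots> \<le> exp (- t * a + p * real (card (P gg)) * (exp t - 1))"
        by (rule chernoff_upper) (use fin sub p t in auto)
      also have "\<dots> \<le> exp (- t * a + p * M * (exp t - 1))"
        using cM p et by (simp add: mult_right_mono mult_left_mono)
      finally show ?thesis .
    qed
    finally show "measure_pmf.prob (map_pmf (?mg g) (OM R p)) {f. Q f \<and> a \<le> real (card {e\<in>P f. f e})}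
        \<le> exp (- t * a + p * M * (exp t - 1))" .
  qed
qed


lemma vpairs_mem: "{u, v} \<in> vpairs n \<longleftrightarrow> u \<noteq> v \<and> u < n \<and> v < n"
proof
  assume "{u, v} \<in> vpairs n"
  then obtain i j where "i < j" "j < n" "{u,v} = {i,j}" unfolding vpairs_def by auto
  thus "u \<noteq> v \<and> u < n \<and> v < n" by (auto simp: doubleton_eq_iff)
next
  assume a: "u \<noteq> v \<and> u < n \<and> v < n"
  show "{u, v} \<in> vpairs n"
  proof (cases "u < v")
    case True thus ?thesis using a unfolding vpairs_def by blast
  next
    case False hence "v < u" using a by auto
    hence "\<exists>i j. {u,v} = {i,j} \<and> i < j \<and> j < n" using a by (intro exI[of _ v] exI[of _ u]) (auto simp: insert_commute)
    thus ?thesis unfolding vpairs_def by blast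
  qed
qed

lemma vpairs_elem: "e \<in> vpairs n \<Longrightarrow> \<exists>u v. e = {u, v} \<and> u \<noteq> v \<and> u < n \<and> v < n"
proof -
  assume "e \<in> vpairs n"
  then obtain i j where "e = {i,j}" "i < j" "j < n" unfolding vpairs_def by auto
  thus ?thesis by (intro exI[of _ i] exI[of _ j]) auto
qed

lemma vpairs_sub: "vpairs n \<subseteq> Pow {..<n}"
  unfolding vpairs_def by auto

lemma finite_vpairs: "finite (vpairs n)"
  by (rule finite_subset[OF vpairs_sub]) auto

lemma card2: "e \<in> vpairs n \<Longrightarrow> card e = 2"
  by (auto dest!: vpairs_elem)

definition heavy :: "nat \<Rightarrow> real \<Rightarrow> nat set set \<Rightarrow> nat \<Rightarrow> bool" where
  "heavy k T G u \<longleftrightarrow> T < real (card {v\<in>{..<k}. {v, u} \<in> G})"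

definition H1 :: "nat \<Rightarrow> real \<Rightarrow> nat set set \<Rightarrow> nat set set" where
  "H1 k T G = {e\<in>G. \<not> (\<exists>u v. e = {u, v} \<and> v < k \<and> heavy k T G u)}"

definition Hc :: "nat \<Rightarrow> real \<Rightarrow> nat set set \<Rightarrow> nat set set" where
  "Hc k T G = {e\<in>H1 k T G. \<not> (\<exists>v<k. \<exists>a b. e = {a, b} \<and> {v, a} \<in> H1 k T G \<and> {v, b} \<in> H1 k T G)}"

lemma Hc_sub: "Hc k T G \<subseteq> G"
  unfolding Hc_def H1_def by auto

lemma Hc_tri:
  assumes v: "v < k" shows "\<not> in_triangle (Hc k T G) v"
proof
  assume "in_triangle (Hc k T G) v"
  then obtain u w where h: "{u, v} \<in> Hc k T G" "{v, w} \<in> Hc k T G" "{u, w} \<in> Hc k T G"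
    unfolding in_triangle_def by blast
  have 1: "{v, u} \<in> H1 k T G" using h(1) unfolding Hc_def by (simp add: insert_commute)
  have 2: "{v, w} \<in> H1 k T G" using h(2) unfolding Hc_def by simp
  have 3: "\<not> (\<exists>v<k. \<exists>a b. {u, w} = {a, b} \<and> {v, a} \<in> H1 k T G \<and> {v, b} \<in> H1 k T G)"
    using h(3) unfolding Hc_def by simp
  show False using 3 v 1 2 by blast
qed

lemma vpairs_mem': "e \<in> G \<Longrightarrow> G \<subseteq> vpairs n \<Longrightarrow> e = {u, v} \<Longrightarrow> u \<noteq> v \<and> u < n \<and> v < n"
  using vpairs_mem by blast



definition Edg :: "nat \<Rightarrow> nat \<Rightarrow> nat \<Rightarrow> nat set set \<Rightarrow> nat set set" where
  "Edg n k x G = {e\<in>G. \<exists>v w. e = {v, w} \<and> v < k \<and> w < n \<and> v \<noteq> x \<and> w \<noteq> x \<and> v \<noteq> w \<and> {v, x} \<in> G \<and> {w, x} \<in> G}"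

lemma degree_loss:
  assumes G: "G \<subseteq> vpairs n" and x: "x < n" and kn: "k \<le> n"
  shows "real (degree G x) \<le> real (degree (Hc k T G) x)
     + (if heavy k T G x then real (card {v\<in>{..<k}. {v, x} \<in> G}) else 0)
     + (if x < k then real (card {u. {u, x} \<in> G \<and> heavy k T G u}) else 0)
     + (if heavy k T G x then 0 else 2 * real (card (Edg n k x G)))"
proof -
  let ?H = "Hc k T G"
  define L1 where "L1 = (if heavy k T G x then {v\<in>{..<k}. {v, x} \<in> G} else {})"
  define L2 where "L2 = (if x < k then {u. {u, x} \<in> G \<and> heavy k T G u} else {})"
  define L3 where "L3 = (if heavy k T G x then {} else \<Union> (Edg n k x G))"
  have finG: "finite G" using G finite_vpairs finite_subset by blast
  have nbfin: "finite {u. {u, x} \<in> G'}" if "G' \<subseteq> vpairs n" for G'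
    by (rule finite_subset[of _ "{..<n}"]) (use that in \<open>auto simp: vpairs_mem\<close>)
  have sub: "{u. {u, x} \<in> G} \<subseteq> {u. {u, x} \<in> ?H} \<union> L1 \<union> L2 \<union> L3"
  proof
    fix u assume "u \<in> {u. {u, x} \<in> G}"
    hence uG: "{u, x} \<in> G" by simp
    have un: "u < n" "u \<noteq> x" using vpairs_mem'[OF uG G refl] by auto
    show "u \<in> {u. {u, x} \<in> ?H} \<union> L1 \<union> L2 \<union> L3"
    proof (cases "{u, x} \<in> ?H")
      case True thus ?thesis by simp
    next
      case notH: False
      show ?thesis
      proof (cases "{u, x} \<in> H1 k T G")
        case False
        then obtain a b where ab: "{u, x} = {a, b}" "b < k" "heavy k T G a"
          using uG unfolding H1_def by auto
        hence "(a = u \<and> b = x) \<or> (a = x \<and> b = u)" by (auto simp: doubleton_eq_iff)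
        thus ?thesis
        proof
          assume "a = u \<and> b = x" thus ?thesis using ab uG by (auto simp: L2_def)
        next
          assume "a = x \<and> b = u" thus ?thesis using ab uG by (auto simp: L1_def insert_commute)
        qed
      next
        case True
        then obtain v a b where vab: "v < k" "{u, x} = {a, b}" "{v, a} \<in> H1 k T G" "{v, b} \<in> H1 k T G"
          using notH unfolding Hc_def by auto
        hence vv: "{v, u} \<in> H1 k T G" "{v, x} \<in> H1 k T G" by (auto simp: doubleton_eq_iff)
        hence light: "\<not> heavy k T G x" using vab(1) unfolding H1_def by (auto simp: insert_commute)
        have vG: "{v, u} \<in> G" "{v, x} \<in> G" using vv unfolding H1_def by auto
        have "v \<noteq> x" "v \<noteq> u" using vpairs_mem'[OF vG(1) G refl] vpairs_mem'[OF vG(2) G refl] by auto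
        hence "{v, u} \<in> Edg n k x G" unfolding Edg_def using vG vab(1) un uG by (auto simp: insert_commute)
        hence "u \<in> \<Union> (Edg n k x G)" by blast
        thus ?thesis using light by (simp add: L3_def)
      qed
    qed
  qed
  have finH: "finite {u. {u, x} \<in> ?H}" using nbfin Hc_sub G by (meson order_trans)
  have fin1: "finite L1" unfolding L1_def by auto
  have fin2: "finite L2" unfolding L2_def using nbfin[OF G] by (auto intro: finite_subset)
  have EG: "Edg n k x G \<subseteq> G" unfolding Edg_def by auto
  have fin3: "finite L3" unfolding L3_def using EG G finG by (auto intro: finite_subset dest!: vpairs_elem)
  have "degree G x \<le> card ({u. {u, x} \<in> ?H} \<union> L1 \<union> L2 \<union> L3)"
    unfolding degree_def by (intro card_mono sub) (use finH fin1 fin2 fin3 in auto)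
  also have "\<dots> \<le> card {u. {u, x} \<in> ?H} + card L1 + card L2 + card L3"
    by (meson card_Un_le add_le_mono le_refl order_trans)
  finally have 1: "real (degree G x) \<le> real (degree ?H x) + card L1 + card L2 + card L3"
    unfolding degree_def by linarith
  have c3: "real (card L3) \<le> (if heavy k T G x then 0 else 2 * real (card (Edg n k x G)))"
  proof (cases "heavy k T G x")
    case False
    have "card (\<Union> (Edg n k x G)) \<le> sum card (Edg n k x G)" by (rule card_Union_le_sum_card)
    also have "\<dots> = sum (\<lambda>_. 2) (Edg n k x G)"
      by (intro sum.cong refl) (use EG G card2 in blast)
    finally show ?thesis using False by (simp add: L3_def)
  qed (simp add: L3_def)
  show ?thesis using 1 c3 by (simp add: L1_def L2_def split: if_splits)
qed


definition st :: "nat set \<Rightarrow> nat \<Rightarrow> nat set set" where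
  "st A x = (\<lambda>v. {v, x}) ` (A - {x})"

lemma st_inj: "inj_on (\<lambda>v. {v, x}) (A - {x})"
  by (auto simp: inj_on_def doubleton_eq_iff)

lemma card_st: "card (st A x) = card (A - {x})"
  unfolding st_def by (rule card_image[OF st_inj])

lemma card_st_f: "card {e\<in>st A x. f e} = card {v\<in>A - {x}. f {v, x}}"
proof -
  have "{e\<in>st A x. f e} = (\<lambda>v. {v, x}) ` {v\<in>A - {x}. f {v, x}}"
    unfolding st_def by auto
  also have "card \<dots> = card {v\<in>A - {x}. f {v, x}}"
    by (rule card_image) (rule inj_on_subset[OF st_inj], auto)
  finally show ?thesis .
qed

lemma st_sub: "A \<subseteq> {..<n} \<Longrightarrow> x < n \<Longrightarrow> st A x \<subseteq> vpairs n"
  unfolding st_def by (auto simp: vpairs_mem)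

definition Gof :: "nat \<Rightarrow> (nat set \<Rightarrow> bool) \<Rightarrow> nat set set" where
  "Gof n f = {e\<in>vpairs n. f e}"

lemma Gof_mem: "{v, x} \<in> Gof n f \<longleftrightarrow> v \<noteq> x \<and> v < n \<and> x < n \<and> f {v, x}"
  unfolding Gof_def by (auto simp: vpairs_mem)

lemma nb_Gof: "A \<subseteq> {..<n} \<Longrightarrow> x < n \<Longrightarrow> {v\<in>A. {v, x} \<in> Gof n f} = {v\<in>A - {x}. f {v, x}}"
  by (auto simp: Gof_mem)

lemma degree_Gof: "x < n \<Longrightarrow> degree (Gof n f) x = card {v\<in>{..<n} - {x}. f {v, x}}"
proof -
  assume x: "x < n"
  have "{u. {u, x} \<in> Gof n f} = {v\<in>{..<n}. {v, x} \<in> Gof n f}" by (auto simp: Gof_mem)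
  thus ?thesis unfolding degree_def using nb_Gof[of "{..<n}" n x f] x by simp
qed

abbreviation OMn where "OMn n p \<equiv> OM (vpairs n) p"

lemma ch_up_st:
  assumes "A \<subseteq> {..<n}" "x < n" "0 \<le> p" "p \<le> 1" "0 \<le> t"
  shows "measure_pmf.prob (OMn n p) {f. a \<le> real (card {v\<in>A - {x}. f {v, x}})}
     \<le> exp (- t * a + p * real (card (A - {x})) * (exp t - 1))"
  using chernoff_upper[OF finite_vpairs st_sub[OF assms(1,2)] assms(3-5), of a]
  by (simp add: card_st_f card_st)

lemma ch_lo_st:
  assumes "A \<subseteq> {..<n}" "x < n" "0 \<le> p" "p \<le> 1" "0 \<le> t"
  shows "measure_pmf.prob (OMn n p) {f. real (card {v\<in>A - {x}. f {v, x}}) \<le> a}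
     \<le> exp (t * a - p * real (card (A - {x})) * (1 - exp (-t)))"
  using chernoff_lower[OF finite_vpairs st_sub[OF assms(1,2)] assms(3-5), of a]
  by (simp add: card_st_f card_st)

lemma ch_up2_st:
  assumes "A \<subseteq> {..<n}" "u < n" "x < n" "u \<noteq> x" "0 \<le> p" "p \<le> 1" "0 \<le> t"
  shows "measure_pmf.prob (OMn n p) {f. f {u, x} \<and> a \<le> real (card {v\<in>(A - {x}) - {u}. f {v, u}})}
     \<le> p * exp (- t * a + p * real (card ((A - {x}) - {u})) * (exp t - 1))"
proof -
  have 1: "st (A - {x}) u \<subseteq> vpairs n" using assms by (intro st_sub) auto
  have 2: "{u, x} \<in> vpairs n" using assms by (simp add: vpairs_mem)
  have 3: "{u, x} \<notin> st (A - {x}) u" unfolding st_def using assms by (auto simp: doubleton_eq_iff)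
  show ?thesis
    using chernoff_upper2[OF finite_vpairs 1 assms(5-7) 2 3, of a]
    by (simp add: card_st_f card_st)
qed

lemma markov_count:
  fixes Q :: "'b \<Rightarrow> ('a \<Rightarrow> bool) \<Rightarrow> bool"
  assumes "finite A" "finite I" "0 < b"
  shows "measure_pmf.prob (OM I p) {f. b \<le> real (card {u\<in>A. Q u f})}
     \<le> (\<Sum>u\<in>A. measure_pmf.prob (OM I p) {f. Q u f}) / b"
proof -
  have fin: "finite (set_pmf (OM I p))"
    using assms(2) by (subst set_Pi_pmf) (auto intro!: finite_PiE_dflt)
  have eq: "real (card {u\<in>A. Q u f}) = (\<Sum>u\<in>A. indicator {f. Q u f} f)" for f
    using assms(1) by (simp add: indicator_def sum.If_cases Int_def)
  have "measure_pmf.prob (OM I p) {f. b \<le> real (card {u\<in>A. Q u f})}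
     \<le> measure_pmf.expectation (OM I p) (\<lambda>f. real (card {u\<in>A. Q u f})) / b"
    by (rule markov_exp) (use assms in auto)
  also have "measure_pmf.expectation (OM I p) (\<lambda>f. real (card {u\<in>A. Q u f}))
     = (\<Sum>u\<in>A. measure_pmf.expectation (OM I p) (indicator {f. Q u f}))"
    unfolding eq by (rule Bochner_Integration.integral_sum) (auto intro: integrable_measure_pmf_finite[OF fin])
  also have "\<dots> = (\<Sum>u\<in>A. measure_pmf.prob (OM I p) {f. Q u f})"
    by (simp add: measure_pmf.emeasure_eq_measure)
  finally show ?thesis .
qed


definition PP :: "nat \<Rightarrow> nat \<Rightarrow> nat \<Rightarrow> (nat set \<Rightarrow> bool) \<Rightarrow> nat set set" where
  "PP n k x f = {{v, w} | v w. v < k \<and> w < n \<and> v \<noteq> x \<and> w \<noteq> x \<and> v \<noteq> w \<and> f {v, x} \<and> f {w, x}}"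

lemma PP_alt: "PP n k x f = {{v, w} | v w. v \<in> {v\<in>{..<k} - {x}. f {v, x}} \<and> w \<in> {v\<in>{..<n} - {x}. f {v, x}} \<and> v \<noteq> w}"
  unfolding PP_def by blast

lemma Edg_Gof:
  assumes "x < n" "k \<le> n"
  shows "Edg n k x (Gof n f) = {e\<in>PP n k x f. f e}"
proof (intro set_eqI iffI)
  fix e assume "e \<in> Edg n k x (Gof n f)"
  hence "e \<in> Gof n f" and "\<exists>v w. e = {v, w} \<and> v < k \<and> w < n \<and> v \<noteq> x \<and> w \<noteq> x \<and> v \<noteq> w \<and> {v, x} \<in> Gof n f \<and> {w, x} \<in> Gof n f"
    unfolding Edg_def by simp_all
  then obtain v w where vw: "e \<in> Gof n f" "e = {v, w}" "v < k" "w < n" "v \<noteq> x" "w \<noteq> x" "v \<noteq> w"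
     "{v, x} \<in> Gof n f" "{w, x} \<in> Gof n f" by blast
  have "f e" using vw(1) by (simp add: Gof_def)
  moreover have "e \<in> PP n k x f" unfolding PP_def using vw by (auto simp: Gof_mem)
  ultimately show "e \<in> {e\<in>PP n k x f. f e}" by simp
next
  fix e assume "e \<in> {e\<in>PP n k x f. f e}"
  hence "f e" and "\<exists>v w. e = {v, w} \<and> v < k \<and> w < n \<and> v \<noteq> x \<and> w \<noteq> x \<and> v \<noteq> w \<and> f {v, x} \<and> f {w, x}"
    unfolding PP_def by simp_all
  then obtain v w where vw: "f e" "e = {v, w}" "v < k" "w < n" "v \<noteq> x" "w \<noteq> x" "v \<noteq> w"
     "f {v, x}" "f {w, x}" by blast
  have vn: "v < n" using vw(3) assms(2) by simp
  have G1: "e \<in> Gof n f" using vw vn by (simp add: Gof_def vpairs_mem)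
  have G2: "{v, x} \<in> Gof n f" "{w, x} \<in> Gof n f" using vw vn assms(1) by (simp_all add: Gof_mem)
  show "e \<in> Edg n k x (Gof n f)" unfolding Edg_def using G1 G2 vw by blast
qed

lemma exp1_le3: "exp (1::real) \<le> 3"
  using exp_bound[of 1] by simp

lemma B4_bound:
  assumes x: "x < n" and kn: "k \<le> n" and p: "0 \<le> p" "p \<le> 1" and TD: "0 \<le> T" "0 \<le> D"
  shows "measure_pmf.prob (OMn n p)
     {f. (real (card {v\<in>{..<k} - {x}. f {v, x}}) \<le> T \<and> real (card {v\<in>{..<n} - {x}. f {v, x}}) \<le> D)
         \<and> a \<le> real (card {e\<in>PP n k x f. f e})}
     \<le> exp (- a + p * (T * D) * 2)"
proof -
  define U where "U = st {..<n} x"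
  define R where "R = vpairs n - U"
  have Usub: "U \<subseteq> vpairs n" using st_sub[of "{..<n}" n x] x by (simp add: U_def)
  have UR: "U \<union> R = vpairs n" using Usub unfolding R_def by blast
  have finU: "finite U" "finite R" using finite_subset[OF Usub finite_vpairs] finite_vpairs by (auto simp: R_def)
  have disj: "U \<inter> R = {}" by (auto simp: R_def)
  have inU: "{v, x} \<in> U" if "v < n" "v \<noteq> x" for v using that by (auto simp: U_def st_def)
  let ?Q = "\<lambda>f. real (card {v\<in>{..<k} - {x}. f {v, x}}) \<le> T \<and> real (card {v\<in>{..<n} - {x}. f {v, x}}) \<le> D"
  have "measure_pmf.prob (OM (U \<union> R) p) {f. ?Q f \<and> a \<le> real (card {e\<in>PP n k x f. f e})}
     \<le> exp (- 1 * a + p * (T * D) * (exp 1 - 1))"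
  proof (rule cond_bound[of U R "PP n k x" ?Q "T * D" p 1 a, OF finU disj])
    fix f g :: "nat set \<Rightarrow> bool" assume ag: "\<forall>e\<in>U. f e = g e"
    have ag': "f {v, x} = g {v, x}" if "v < n" "v \<noteq> x" for v using ag inU[OF that] by blast
    moreover have "{v\<in>{..<k} - {x}. f {v, x}} = {v\<in>{..<k} - {x}. g {v, x}}"
      using ag' kn by auto
    moreover have "{v\<in>{..<n} - {x}. f {v, x}} = {v\<in>{..<n} - {x}. g {v, x}}"
      using ag' by auto
    ultimately show "PP n k x f = PP n k x g \<and> (?Q f \<longleftrightarrow> ?Q g)" by (simp only: PP_alt)
  next
    fix f assume q: "?Q f"
    let ?NS = "{v\<in>{..<k} - {x}. f {v, x}}" and ?N = "{v\<in>{..<n} - {x}. f {v, x}}"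
    have sub: "PP n k x f \<subseteq> (\<lambda>(v, w). {v, w}) ` (?NS \<times> ?N)"
    proof
      fix e assume "e \<in> PP n k x f"
      then obtain v w where vw: "e = {v, w}" "v < k" "w < n" "v \<noteq> x" "w \<noteq> x" "f {v, x}" "f {w, x}"
        unfolding PP_def by blast
      have "(v, w) \<in> ?NS \<times> ?N" using vw by simp
      thus "e \<in> (\<lambda>(v, w). {v, w}) ` (?NS \<times> ?N)" using vw(1) by (intro rev_image_eqI[of "(v, w)"]) auto
    qed
    have "card (PP n k x f) \<le> card ((\<lambda>(v, w). {v, w}) ` (?NS \<times> ?N))"
      by (rule card_mono[OF _ sub]) auto
    also have "\<dots> \<le> card (?NS \<times> ?N)" by (rule card_image_le) auto
    also have "\<dots> = card ?NS * card ?N" by (rule card_cartesian_product)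
    finally have cc: "card (PP n k x f) \<le> card ?NS * card ?N" .
    have "real (card (PP n k x f)) \<le> real (card ?NS) * real (card ?N)"
      using of_nat_mono[OF cc, where 'a=real] by simp
    also have "\<dots> \<le> T * D" using q TD by (intro mult_mono) auto
    finally have c: "real (card (PP n k x f)) \<le> T * D" .
    have "PP n k x f \<subseteq> R"
    proof
      fix e assume "e \<in> PP n k x f"
      then obtain v w where vw: "e = {v, w}" "v < k" "w < n" "v \<noteq> x" "w \<noteq> x" "v \<noteq> w"
        unfolding PP_def by blast
      have "e \<in> vpairs n" using vw kn by (simp add: vpairs_mem)
      moreover have "e \<notin> U" using vw unfolding U_def st_def by (auto simp: doubleton_eq_iff)
      ultimately show "e \<in> R" by (simp add: R_def)
    qed
    thus "PP n k x f \<subseteq> R \<and> real (card (PP n k x f)) \<le> T * D" using c by simp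
  qed (use p in simp_all)
  also have "\<dots> \<le> exp (- a + p * (T * D) * 2)"
    using exp1_le3 p TD by (simp add: mult_left_mono mult_nonneg_nonneg)
  finally show ?thesis unfolding UR .
qed

lemma heavy_bound:
  assumes x: "x < n" and u: "u < n" "u \<noteq> x" and kn: "k \<le> n" and p: "0 \<le> p" "p \<le> 1"
  shows "measure_pmf.prob (OMn n p) {f. f {u, x} \<and> heavy k T (Gof n f) u}
     \<le> p * exp (1 - T + 2 * p * real k)"
proof -
  let ?C = "\<lambda>f. {v\<in>({..<k} - {x}) - {u}. f {v, u}}"
  have "{f. f {u, x} \<and> heavy k T (Gof n f) u} \<subseteq> {f. f {u, x} \<and> T - 1 \<le> real (card (?C f))}"
  proof clarify
    fix f assume fu: "f {u, x}" and h: "heavy k T (Gof n f) u"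
    have "{v\<in>{..<k}. {v, u} \<in> Gof n f} = {v\<in>{..<k} - {u}. f {v, u}}"
      by (rule nb_Gof) (use kn u in auto)
    hence T1: "T < real (card {v\<in>{..<k} - {u}. f {v, u}})" using h unfolding heavy_def by simp
    have "{v\<in>{..<k} - {u}. f {v, u}} \<subseteq> insert x (?C f)" by auto
    hence "card {v\<in>{..<k} - {u}. f {v, u}} \<le> card (insert x (?C f))" by (intro card_mono) auto
    also have "\<dots> \<le> Suc (card (?C f))" by (rule card_insert_le_m1) auto
    finally show "T - 1 \<le> real (card (?C f))" using T1 by linarith
  qed
  hence "measure_pmf.prob (OMn n p) {f. f {u, x} \<and> heavy k T (Gof n f) u}
      \<le> measure_pmf.prob (OMn n p) {f. f {u, x} \<and> T - 1 \<le> real (card (?C f))}"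
    by (intro measure_pmf.finite_measure_mono) auto
  also have "\<dots> \<le> p * exp (- 1 * (T - 1) + p * real (card (({..<k} - {x}) - {u})) * (exp 1 - 1))"
    by (rule ch_up2_st) (use x u kn p in auto)
  also have "\<dots> \<le> p * exp (1 - T + 2 * p * real k)"
  proof -
    have "({..<k} - {x}) - {u} \<subseteq> {..<k}" by auto
    from card_mono[OF finite_lessThan this] have "card (({..<k} - {x}) - {u}) \<le> k" by simp
    hence "p * real (card (({..<k} - {x}) - {u})) * (exp 1 - 1) \<le> p * real k * 2"
      using exp1_le3 p by (intro mult_mono mult_left_mono) auto
    thus ?thesis using p by (intro mult_left_mono) auto
  qed
  finally show ?thesis .
qed


lemma AB1:
  fixes d p X :: real
  assumes d: "0 < d" "d \<le> 1" and p: "0 < p" "p \<le> 1" and X: "p \<le> X"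
  shows "d * ((1 - d) * X) - (X - p) * (1 - exp (-d)) \<le> 1 - d^3 * X / 2"
proof -
  have e: "exp (-d) \<le> 1 / (1 + d)"
  proof -
    have "1 + d \<le> exp d" by simp
    hence "1 / exp d \<le> 1 / (1 + d)" using d by (intro divide_left_mono) auto
    thus ?thesis by (simp add: exp_minus field_simps)
  qed
  have "d / (1 + d) \<le> 1 - exp (-d)" using e d by (simp add: field_simps)
  hence "(X - p) * (d / (1 + d)) \<le> (X - p) * (1 - exp (-d))" using X by (intro mult_left_mono) auto
  moreover have "d * ((1 - d) * X) - (X - p) * (d / (1 + d)) = (p * d - d^3 * X) / (1 + d)"
    using d by (simp add: field_simps power3_eq_cube)
  moreover have "(p * d - d^3 * X) / (1 + d) \<le> 1 - d^3 * X / 2"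
  proof -
    have X0: "0 \<le> d^3 * X" using d X p by simp
    have "p * d \<le> 1 * d" using p d by (intro mult_right_mono) auto
    hence "p * d \<le> 1 + d" using d by linarith
    moreover have "((1 + d) / 2) * (d^3 * X) \<le> 1 * (d^3 * X)" using d X0
      by (intro mult_right_mono) auto
    hence "(1 + d) * (d^3 * X) / 2 \<le> d^3 * X" by simp
    moreover have "(1 + d) * (1 - d^3 * X / 2) = 1 + d - (1 + d) * (d^3 * X) / 2" by (simp add: algebra_simps)
    ultimately have "p * d - d^3 * X \<le> (1 + d) * (1 - d^3 * X / 2)" by linarith
    thus ?thesis using d by (simp add: divide_le_eq mult.commute)
  qed
  ultimately show ?thesis by linarith
qed

lemma exp_half_le: "exp (1/2::real) - 1 \<le> 3/4"
proof -
  have "exp (1/2::real) \<le> 1 + 1/2 + (1/2)\<^sup>2" by (rule exp_bound) auto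
  thus ?thesis by (simp add: power2_eq_square)
qed

locale core =
  fixes e0 p :: real and n :: nat
  assumes e0: "0 < e0" "e0 \<le> 1" and p: "0 < p" "p \<le> 1" and np: "1 \<le> real n * p^2" and n2: "2 \<le> n"
begin

definition "c = e0 / 256"
definition "k = nat \<lceil>c / p^2\<rceil>"
definition "T = e0 / (64 * p)"

lemma c_pos: "0 < c" using e0 by (simp add: c_def)

lemma invp: "1 / p \<le> real n * p"
proof -
  have "1 / p \<le> (real n * p^2) / p" using np p by (intro divide_right_mono) auto
  thus ?thesis using p by (simp add: power2_eq_square)
qed

lemma invp2: "1 / p^2 \<le> real n"
proof -
  have "1 / p^2 \<le> (real n * p^2) / p^2" using np p by (intro divide_right_mono) auto
  thus ?thesis using p by simp
qed

lemma k_ge: "c / p^2 \<le> real k"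
  unfolding k_def by linarith

lemma k_le: "real k \<le> c / p^2 + 1"
proof -
  have "0 \<le> c / p^2" using c_pos by simp
  thus ?thesis unfolding k_def by linarith
qed

lemma k_n: "k \<le> n"
proof -
  have "c / p^2 = c * (1 / p^2)" by simp
  also have "\<dots> \<le> c * real n" using invp2 c_pos by (intro mult_left_mono) auto
  finally have "real k \<le> c * real n + 1" using k_le by linarith
  moreover have "c * real n + 1 \<le> real n"
  proof -
    have "e0 * real n \<le> 1 * real n" using e0 by (intro mult_right_mono) auto
    moreover have "2 \<le> real n" using n2 by simp
    ultimately show ?thesis unfolding c_def by linarith
  qed
  ultimately show ?thesis by linarith
qed

lemma pk: "p * real k \<le> c / p + p"
proof -
  have "p * real k \<le> p * (c / p^2 + 1)" using k_le p by (intro mult_left_mono) auto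
  also have "\<dots> = c / p + p" using p by (simp add: field_simps power2_eq_square)
  finally show ?thesis .
qed

lemma X_ge_p: "p \<le> real n * p"
  using n2 p by simp

lemma X_pos: "0 < real n * p" using n2 p by simp

definition "B1 x = {f. real (card {v\<in>{..<n}-{x}. f {v,x}}) \<le> (1 - e0/4) * (real n * p)}"
definition "B2 x = {f. 2 * (real n * p) \<le> real (card {v\<in>{..<n}-{x}. f {v,x}})}"
definition "B3 x = {f. e0 * (real n * p) / 4 \<le> real (card {v\<in>{..<k}-{x}. f {v,x}})}"
definition "B4 x = {f. (real (card {v\<in>{..<k}-{x}. f {v,x}}) \<le> T \<and> real (card {v\<in>{..<n}-{x}. f {v,x}}) \<le> 2 * (real n * p))
      \<and> e0 * (real n * p) / 8 \<le> real (card {e\<in>PP n k x f. f e})}"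
definition "B5 x = {f. e0 * (real n * p) / 4 \<le> real (card {u\<in>{..<n}-{x}. f {u,x} \<and> heavy k T (Gof n f) u})}"

lemma card_n1: "x < n \<Longrightarrow> real (card ({..<n} - {x})) = real n - 1"
  by (simp add: card_Diff_singleton of_nat_diff)

lemma pB1: assumes x: "x < n" shows "measure_pmf.prob (OMn n p) (B1 x) \<le> exp (1 - (e0/4)^3 * (real n * p) / 2)"
proof -
  have "measure_pmf.prob (OMn n p) (B1 x) \<le> exp (e0/4 * ((1 - e0/4) * (real n * p)) - p * real (card ({..<n} - {x})) * (1 - exp (- (e0/4))))"
    unfolding B1_def by (rule ch_lo_st) (use x p e0 in auto)
  also have "p * real (card ({..<n} - {x})) = real n * p - p" using x p by (simp add: card_n1 field_simps)
  also have "e0/4 * ((1 - e0/4) * (real n * p)) - (real n * p - p) * (1 - exp (- (e0/4))) \<le> 1 - (e0/4)^3 * (real n * p) / 2"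
    by (rule AB1) (use e0 p X_ge_p in auto)
  finally show ?thesis by simp
qed

lemma pB2: assumes x: "x < n" shows "measure_pmf.prob (OMn n p) (B2 x) \<le> exp (- (real n * p) / 4)"
proof -
  have "measure_pmf.prob (OMn n p) (B2 x) \<le> exp (- (1/2) * (2 * (real n * p)) + p * real (card ({..<n} - {x})) * (exp (1/2) - 1))"
    unfolding B2_def by (rule ch_up_st) (use x p e0 in auto)
  also have "p * real (card ({..<n} - {x})) = real n * p - p" using x p by (simp add: card_n1 field_simps)
  also have "(real n * p - p) * (exp (1/2) - 1) \<le> (real n * p) * (3/4)"
  proof -
    have "(real n * p - p) * (exp (1/2) - 1) \<le> (real n * p) * (exp (1/2) - 1)"
      using p by (intro mult_right_mono) auto
    also have "\<dots> \<le> (real n * p) * (3/4)" using exp_half_le X_pos by (intro mult_left_mono) auto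
    finally show ?thesis .
  qed
  hence "- (1/2) * (2 * (real n * p)) + (real n * p - p) * (exp (1/2) - 1) \<le> - (real n * p) / 4" by linarith
  finally show ?thesis by simp
qed

lemma two_pk: "2 * p * real k \<le> e0 / (128 * p) + 2"
proof -
  have "2 * p * real k \<le> 2 * (c / p + p)" using pk by (simp add: mult.assoc)
  also have "\<dots> = e0 / (128 * p) + 2 * p" by (simp add: c_def field_simps)
  also have "\<dots> \<le> e0 / (128 * p) + 2" using p by simp
  finally show ?thesis .
qed

lemma two_pk': "2 * p * real k \<le> e0 * (real n * p) / 128 + 2"
proof -
  have "e0 / (128 * p) = (e0/128) * (1 / p)" by simp
  also have "\<dots> \<le> (e0/128) * (real n * p)" using invp e0 by (intro mult_left_mono) auto
  finally show ?thesis using two_pk by linarith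
qed

lemma pB3: assumes x: "x < n" shows "measure_pmf.prob (OMn n p) (B3 x) \<le> exp (2 - e0 * (real n * p) / 8)"
proof -
  have "measure_pmf.prob (OMn n p) (B3 x) \<le> exp (- 1 * (e0 * (real n * p) / 4) + p * real (card ({..<k} - {x})) * (exp 1 - 1))"
    unfolding B3_def by (rule ch_up_st) (use x p e0 k_n in auto)
  also have "p * real (card ({..<k} - {x})) * (exp 1 - 1) \<le> 2 * p * real k"
  proof -
    have "({..<k} - {x}) \<subseteq> {..<k}" by auto
    from card_mono[OF finite_lessThan this] have "card ({..<k} - {x}) \<le> k" by simp
    hence "p * real (card ({..<k} - {x})) * (exp 1 - 1) \<le> p * real k * 2"
      using exp1_le3 p by (intro mult_mono mult_left_mono) auto
    thus ?thesis by simp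
  qed
  hence "- 1 * (e0 * (real n * p) / 4) + p * real (card ({..<k} - {x})) * (exp 1 - 1) \<le> 2 - e0 * (real n * p) / 8"
  proof -
    have "0 \<le> e0 * (real n * p)" using e0 X_pos by simp
    thus ?thesis using two_pk' \<open>p * real (card ({..<k} - {x})) * (exp 1 - 1) \<le> 2 * p * real k\<close> by linarith
  qed
  finally show ?thesis by simp
qed

lemma pB4: assumes x: "x < n" shows "measure_pmf.prob (OMn n p) (B4 x) \<le> exp (- e0 * (real n * p) / 16)"
proof -
  have "measure_pmf.prob (OMn n p) (B4 x) \<le> exp (- (e0 * (real n * p) / 8) + p * (T * (2 * (real n * p))) * 2)"
    unfolding B4_def by (rule B4_bound) (use x p e0 k_n X_pos in \<open>auto simp: T_def\<close>)
  also have "p * (T * (2 * (real n * p))) * 2 = e0 * (real n * p) / 16"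
    using p by (simp add: T_def field_simps)
  finally show ?thesis by (simp add: mult.commute)
qed

lemma pB5: assumes x: "x < n" shows "measure_pmf.prob (OMn n p) (B5 x) \<le> 4 * exp (3 - e0 / (128 * p)) / e0"
proof -
  let ?E = "exp (1 - T + 2 * p * real k)"
  have b: "0 < e0 * (real n * p) / 4" using e0 X_pos by simp
  have "measure_pmf.prob (OMn n p) (B5 x) \<le> (\<Sum>u\<in>{..<n}-{x}. measure_pmf.prob (OMn n p) {f. f {u,x} \<and> heavy k T (Gof n f) u}) / (e0 * (real n * p) / 4)"
    unfolding B5_def by (rule markov_count[OF _ finite_vpairs b]) auto
  also have "(\<Sum>u\<in>{..<n}-{x}. measure_pmf.prob (OMn n p) {f. f {u,x} \<and> heavy k T (Gof n f) u}) \<le> (\<Sum>u\<in>{..<n}-{x}. p * ?E)"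
    by (intro sum_mono heavy_bound) (use x p k_n in auto)
  also have "\<dots> = real (card ({..<n}-{x})) * (p * ?E)" by simp
  also have "\<dots> \<le> real n * (p * ?E)"
  proof -
    have "({..<n} - {x}) \<subseteq> {..<n}" by auto
    from card_mono[OF finite_lessThan this] have "card ({..<n} - {x}) \<le> n" by simp
    thus ?thesis using p by (intro mult_right_mono) auto
  qed
  finally have "measure_pmf.prob (OMn n p) (B5 x) \<le> real n * (p * ?E) / (e0 * (real n * p) / 4)"
    using b by (simp add: divide_right_mono)
  also have "\<dots> = 4 * ?E / e0" using X_pos e0 p n2 by (simp add: field_simps)
  also have "?E \<le> exp (3 - e0 / (128 * p))"
  proof -
    have "T = 2 * (e0 / (128 * p))" by (simp add: T_def)
    thus ?thesis using two_pk by simp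
  qed
  hence "4 * ?E / e0 \<le> 4 * exp (3 - e0 / (128 * p)) / e0" using e0 by (simp add: divide_right_mono)
  finally show ?thesis .
qed

end


context core begin

lemma Gof_sub: "Gof n f \<subseteq> vpairs n" unfolding Gof_def by auto

lemma good_event:
  assumes g1: "\<And>x. x < n \<Longrightarrow> f \<notin> B1 x \<and> f \<notin> B2 x \<and> f \<notin> B3 x \<and> f \<notin> B4 x"
      and g5: "\<And>x. x < k \<Longrightarrow> f \<notin> B5 x"
  shows "\<exists>H \<subseteq> Gof n f. (\<forall>v<n. (1 - e0) * real n * p \<le> real (degree H v)) \<and>
           c / p^2 \<le> real (card {v. v < n \<and> \<not> in_triangle H v})"
proof (intro exI[of _ "Hc k T (Gof n f)"] conjI allI impI)
  show "Hc k T (Gof n f) \<subseteq> Gof n f" by (rule Hc_sub)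
next
  let ?H = "Hc k T (Gof n f)"
  have "{..<k} \<subseteq> {v. v < n \<and> \<not> in_triangle ?H v}" using k_n Hc_tri by auto
  hence "k \<le> card {v. v < n \<and> \<not> in_triangle ?H v}"
    using card_mono[of "{v. v < n \<and> \<not> in_triangle ?H v}" "{..<k}"] by auto
  thus "c / p^2 \<le> real (card {v. v < n \<and> \<not> in_triangle ?H v})" using k_ge by linarith
next
  fix x assume x: "x < n"
  let ?G = "Gof n f" let ?H = "Hc k T (Gof n f)"
  let ?X = "real n * p"
  have nb1: "f \<notin> B1 x" "f \<notin> B2 x" "f \<notin> B3 x" "f \<notin> B4 x" using g1[OF x] by auto
  have dl: "real (degree ?G x) \<le> real (degree ?H x)
     + (if heavy k T ?G x then real (card {v\<in>{..<k}. {v, x} \<in> ?G}) else 0)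
     + (if x < k then real (card {u. {u, x} \<in> ?G \<and> heavy k T ?G u}) else 0)
     + (if heavy k T ?G x then 0 else 2 * real (card (Edg n k x ?G)))"
    by (rule degree_loss[OF Gof_sub x k_n])
  have dG: "degree ?G x = card {v\<in>{..<n} - {x}. f {v, x}}" by (rule degree_Gof[OF x])
  have d1: "(1 - e0/4) * ?X < real (degree ?G x)" using nb1(1) dG by (simp add: B1_def)
  have Lh: "{v\<in>{..<k}. {v, x} \<in> ?G} = {v\<in>{..<k} - {x}. f {v, x}}"
    by (rule nb_Gof) (use k_n x in auto)
  have hv: "heavy k T ?G x \<longleftrightarrow> T < real (card {v\<in>{..<k} - {x}. f {v, x}})"
    unfolding heavy_def Lh ..
  have X0: "0 \<le> e0 * ?X" using e0 X_pos by simp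
  have t1: "(if heavy k T ?G x then real (card {v\<in>{..<k}. {v, x} \<in> ?G}) else 0) \<le> e0 * ?X / 4"
  proof -
    have "real (card {v\<in>{..<k} - {x}. f {v, x}}) < e0 * ?X / 4" using nb1(3) by (simp add: B3_def)
    thus ?thesis using e0 X_pos Lh by auto
  qed
  have t2: "(if x < k then real (card {u. {u, x} \<in> ?G \<and> heavy k T ?G u}) else 0) \<le> e0 * ?X / 4"
  proof (cases "x < k")
    case True
    have "{u. {u, x} \<in> ?G \<and> heavy k T ?G u} = {u\<in>{..<n}-{x}. f {u,x} \<and> heavy k T ?G u}"
      using x by (auto simp: Gof_mem)
    moreover have "f \<notin> B5 x" using g5 True by auto
    ultimately show ?thesis using True by (simp add: B5_def)
  qed (use X0 in simp)
  have t3: "(if heavy k T ?G x then 0 else 2 * real (card (Edg n k x ?G))) \<le> e0 * ?X / 4"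
  proof (cases "heavy k T ?G x")
    case False
    hence q1: "real (card {v\<in>{..<k} - {x}. f {v, x}}) \<le> T" using hv by simp
    have q2: "real (card {v\<in>{..<n} - {x}. f {v, x}}) \<le> 2 * ?X" using nb1(2) by (simp add: B2_def)
    have "\<not> (e0 * ?X / 8 \<le> real (card {e\<in>PP n k x f. f e}))" using nb1(4) q1 q2 by (simp add: B4_def)
    moreover have "Edg n k x ?G = {e\<in>PP n k x f. f e}" by (rule Edg_Gof[OF x k_n])
    ultimately show ?thesis using False by simp
  qed (use X0 in simp)
  have "(1 - e0) * ?X = (1 - e0/4) * ?X - 3 * (e0 * ?X / 4)" by (simp add: algebra_simps)
  thus "(1 - e0) * real n * p \<le> real (degree ?H x)" using dl d1 t1 t2 t3 by (simp add: mult.assoc)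
qed


definition "beta = real n * (exp (1 - (e0/4)^3 * (real n * p) / 2) + exp (- (real n * p) / 4)
    + exp (2 - e0 * (real n * p) / 8) + exp (- e0 * (real n * p) / 16))
    + (c / p^2 + 1) * (4 * exp (3 - e0 / (128 * p)) / e0)"

lemma main_bound:
  "1 - beta \<le> measure_pmf.prob (Gnp n p)
     {G. \<exists>H \<subseteq> G. (\<forall>v<n. (1 - e0) * real n * p \<le> real (degree H v)) \<and>
           c / p^2 \<le> real (card {v. v < n \<and> \<not> in_triangle H v})}"
proof -
  let ?M = "OMn n p"
  let ?Ev = "{G. \<exists>H \<subseteq> G. (\<forall>v<n. (1 - e0) * real n * p \<le> real (degree H v)) \<and>
           c / p^2 \<le> real (card {v. v < n \<and> \<not> in_triangle H v})}"
  define Bad where "Bad = (\<Union>x\<in>{..<n}. B1 x \<union> B2 x \<union> B3 x \<union> B4 x) \<union> (\<Union>x\<in>{..<k}. B5 x)"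
  let ?b1 = "exp (1 - (e0/4)^3 * (real n * p) / 2) + exp (- (real n * p) / 4)
    + exp (2 - e0 * (real n * p) / 8) + exp (- e0 * (real n * p) / 16)"
  let ?b5 = "4 * exp (3 - e0 / (128 * p)) / e0"
  have "Gnp n p = map_pmf (Gof n) ?M" unfolding Gnp_def Gof_def by simp
  hence eq: "measure_pmf.prob (Gnp n p) ?Ev = measure_pmf.prob ?M (Gof n -` ?Ev)" by simp
  have sub: "UNIV - Bad \<subseteq> Gof n -` ?Ev"
  proof
    fix f assume "f \<in> UNIV - Bad"
    hence g1: "\<And>x. x < n \<Longrightarrow> f \<notin> B1 x \<and> f \<notin> B2 x \<and> f \<notin> B3 x \<and> f \<notin> B4 x"
      and g5: "\<And>x. x < k \<Longrightarrow> f \<notin> B5 x" unfolding Bad_def by auto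
    show "f \<in> Gof n -` ?Ev" using good_event[OF g1 g5] by simp
  qed
  have p1: "measure_pmf.prob ?M (\<Union>x\<in>{..<n}. B1 x \<union> B2 x \<union> B3 x \<union> B4 x) \<le> real n * ?b1"
  proof -
    have "measure_pmf.prob ?M (\<Union>x\<in>{..<n}. B1 x \<union> B2 x \<union> B3 x \<union> B4 x)
        \<le> (\<Sum>x\<in>{..<n}. measure_pmf.prob ?M (B1 x \<union> B2 x \<union> B3 x \<union> B4 x))"
      by (rule measure_pmf.finite_measure_subadditive_finite) auto
    also have "\<dots> \<le> (\<Sum>x\<in>{..<n}. ?b1)"
    proof (rule sum_mono)
      fix x assume "x \<in> {..<n}" hence x: "x < n" by simp
      have "measure_pmf.prob ?M (B1 x \<union> B2 x \<union> B3 x \<union> B4 x)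
         \<le> measure_pmf.prob ?M (B1 x \<union> B2 x \<union> B3 x) + measure_pmf.prob ?M (B4 x)"
        by (rule measure_subadditive) (auto simp: measure_pmf.emeasure_eq_measure)
      also have "measure_pmf.prob ?M (B1 x \<union> B2 x \<union> B3 x)
         \<le> measure_pmf.prob ?M (B1 x \<union> B2 x) + measure_pmf.prob ?M (B3 x)"
        by (rule measure_subadditive) (auto simp: measure_pmf.emeasure_eq_measure)
      also have "measure_pmf.prob ?M (B1 x \<union> B2 x)
         \<le> measure_pmf.prob ?M (B1 x) + measure_pmf.prob ?M (B2 x)"
        by (rule measure_subadditive) (auto simp: measure_pmf.emeasure_eq_measure)
      finally show "measure_pmf.prob ?M (B1 x \<union> B2 x \<union> B3 x \<union> B4 x) \<le> ?b1"
        using pB1[OF x] pB2[OF x] pB3[OF x] pB4[OF x] by linarith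
    qed
    finally show ?thesis by simp
  qed
  have p5: "measure_pmf.prob ?M (\<Union>x\<in>{..<k}. B5 x) \<le> (c / p^2 + 1) * ?b5"
  proof -
    have "measure_pmf.prob ?M (\<Union>x\<in>{..<k}. B5 x) \<le> (\<Sum>x\<in>{..<k}. measure_pmf.prob ?M (B5 x))"
      by (rule measure_pmf.finite_measure_subadditive_finite) auto
    also have "\<dots> \<le> (\<Sum>x\<in>{..<k}. ?b5)"
      by (rule sum_mono) (use pB5 k_n in auto)
    also have "\<dots> = real k * ?b5" by simp
    also have "\<dots> \<le> (c / p^2 + 1) * ?b5"
      using k_le e0 by (intro mult_right_mono) auto
    finally show ?thesis .
  qed
  have "measure_pmf.prob ?M Bad \<le> measure_pmf.prob ?M (\<Union>x\<in>{..<n}. B1 x \<union> B2 x \<union> B3 x \<union> B4 x)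
      + measure_pmf.prob ?M (\<Union>x\<in>{..<k}. B5 x)"
    unfolding Bad_def by (rule measure_subadditive) (auto simp: measure_pmf.emeasure_eq_measure)
  hence pb: "measure_pmf.prob ?M Bad \<le> beta" using p1 p5 unfolding beta_def by linarith
  have "1 - measure_pmf.prob ?M Bad = measure_pmf.prob ?M (UNIV - Bad)"
    using measure_pmf.prob_compl[of Bad ?M] by simp
  also have "\<dots> \<le> measure_pmf.prob ?M (Gof n -` ?Ev)"
    by (rule measure_pmf.finite_measure_mono[OF sub]) auto
  finally show ?thesis using eq pb by linarith
qed

end


lemma lim1: fixes a g :: real assumes "a > 0" shows "(\<lambda>n::nat. real n * exp (g - a * sqrt (real n))) \<longlonglongrightarrow> 0"
  using assms by real_asymp

lemma lim2: fixes b c d e :: real assumes "b > 0"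
  shows "((\<lambda>y::real. (c / y^2 + 1) * (e * exp (d - b / y))) \<longlongrightarrow> 0) (at_right 0)"
  using assms by real_asymp

lemma exp_mono_sqrt:
  fixes a g X s :: real assumes "0 \<le> a" "s \<le> X"
  shows "exp (g - a * X) \<le> exp (g - a * s)"
  using assms by (simp add: mult_left_mono)


lemma main_bound_global:
  assumes "0 < e0" "e0 \<le> 1" "0 < p" "p \<le> 1" "1 \<le> real n * p^2" "2 \<le> n"
  shows "1 - (real n * (exp (1 - (e0/4)^3 * (real n * p) / 2) + exp (- (real n * p) / 4)
    + exp (2 - e0 * (real n * p) / 8) + exp (- e0 * (real n * p) / 16))
    + (e0 / 256 / p^2 + 1) * (4 * exp (3 - e0 / (128 * p)) / e0))
    \<le> measure_pmf.prob (Gnp n p)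
     {G. \<exists>H \<subseteq> G. (\<forall>v<n. (1 - e0) * real n * p \<le> real (degree H v)) \<and>
           e0 / 256 / p^2 \<le> real (card {v. v < n \<and> \<not> in_triangle H v})}"
proof -
  interpret core e0 p n using assms by unfold_locales
  show ?thesis using main_bound unfolding beta_def c_def .
qed

lemma powr_facts:
  fixes q :: real and n :: nat
  assumes n: "1 \<le> n" and h: "real n powr (-1/2) \<le> q"
  shows "0 < q" "sqrt (real n) \<le> real n * q" "1 \<le> real n * q^2"
proof -
  have eq: "real n powr (-1/2) = 1 / sqrt (real n)"
    using n by (simp add: powr_minus_divide powr_half_sqrt)
  have sp: "0 < sqrt (real n)" using n by simp
  show q0: "0 < q" using h eq sp by (metis divide_pos_pos order_less_le_trans zero_less_one)
  have "real n * (1 / sqrt (real n)) \<le> real n * q" using h eq by (intro mult_left_mono) auto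
  moreover have "real n * (1 / sqrt (real n)) = sqrt (real n)"
    using sp by (metis real_div_sqrt of_nat_0_le_iff times_divide_eq_right mult.right_neutral)
  ultimately show nq: "sqrt (real n) \<le> real n * q" by simp
  have "sqrt (real n) * (1 / sqrt (real n)) \<le> (real n * q) * q"
    using nq h eq sp q0 by (intro mult_mono) auto
  thus "1 \<le> real n * q^2" using sp by (simp add: power2_eq_square mult.assoc)
qed


theorem proposition4p6:
  fixes \<epsilon> :: real
  assumes "\<epsilon> > 0"
  shows "\<exists>C>0. \<forall>p :: nat \<Rightarrow> real.
           (\<forall>\<^sub>F n in sequentially. C * real n powr (-1/2) \<le> p n) \<longrightarrow>
           p \<longlonglongrightarrow> 0 \<longrightarrow>
           (\<exists>c>0. (\<lambda>n. measure_pmf.prob (Gnp n (p n))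
              {G. \<exists>H \<subseteq> G.
                   (\<forall>v<n. real (degree H v) \<ge> (1 - \<epsilon>) * real n * p n) \<and>
                   real (card {v. v < n \<and> \<not> in_triangle H v}) \<ge> c / (p n)\<^sup>2})
            \<longlonglongrightarrow> 1)"
proof -
  define e0 where "e0 = min \<epsilon> 1"
  have e0: "0 < e0" "e0 \<le> 1" "e0 \<le> \<epsilon>" using assms by (auto simp: e0_def)
  show ?thesis
  proof (rule exI[of _ "1::real"], intro conjI allI impI)
    fix p :: "nat \<Rightarrow> real"
    assume ev: "\<forall>\<^sub>F n in sequentially. 1 * real n powr (-1/2) \<le> p n" and lim: "p \<longlonglongrightarrow> 0"
    define c where "c = e0 / 256"
    have c0: "0 < c" using e0 by (simp add: c_def)
    let ?Ev = "\<lambda>n. {G. \<exists>H \<subseteq> G.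
                   (\<forall>v<n. real (degree H v) \<ge> (1 - \<epsilon>) * real n * p n) \<and>
                   real (card {v. v < n \<and> \<not> in_triangle H v}) \<ge> c / (p n)\<^sup>2}"
    define h where "h = (\<lambda>y::real. (c / y^2 + 1) * ((4 / e0) * exp (3 - e0 / 128 / y)))"
    define beta where "beta = (\<lambda>n. real n * (exp (1 - (e0/4)^3 * (real n * p n) / 2) + exp (- (real n * p n) / 4)
      + exp (2 - e0 * (real n * p n) / 8) + exp (- e0 * (real n * p n) / 16))
      + (e0 / 256 / (p n)^2 + 1) * (4 * exp (3 - e0 / (128 * p n)) / e0))"
    define gam where "gam = (\<lambda>n::nat. real n * exp (1 - ((e0/4)^3/2) * sqrt (real n))
      + real n * exp (0 - (1/4) * sqrt (real n)) + real n * exp (2 - (e0/8) * sqrt (real n))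
      + real n * exp (0 - (e0/16) * sqrt (real n)) + h (p n))"
    have evp1: "\<forall>\<^sub>F n in sequentially. p n < 1"
      using lim by (rule order_tendstoD(2)) simp
    have evn: "\<forall>\<^sub>F n in sequentially. 2 \<le> n" by (rule eventually_ge_at_top)
    have good: "\<forall>\<^sub>F n in sequentially. 0 < p n \<and> p n \<le> 1 \<and> 2 \<le> n \<and> sqrt (real n) \<le> real n * p n
         \<and> 1 \<le> real n * (p n)^2"
      using ev evp1 evn
    proof eventually_elim
      case (elim n)
      have "1 \<le> n" using elim by simp
      with elim powr_facts[of n "p n"] show ?case by auto
    qed
    have gam0: "gam \<longlonglongrightarrow> 0"
    proof -
      have pr: "filterlim p (at_right 0) sequentially"
        using lim by (rule tendsto_imp_filterlim_at_right) (use good in \<open>auto elim: eventually_mono\<close>)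
      have "((\<lambda>y. (c / y^2 + 1) * ((4 / e0) * exp (3 - (e0/128) / y))) \<longlongrightarrow> 0) (at_right 0)"
        by (rule lim2) (use e0 in simp)
      hence "(h \<longlongrightarrow> 0) (at_right 0)" by (simp add: h_def)
      hence hp: "(\<lambda>n. h (p n)) \<longlonglongrightarrow> 0" using pr by (rule filterlim_compose)
      have "(\<lambda>n. real n * exp (1 - ((e0/4)^3/2) * sqrt (real n))
      + real n * exp (0 - (1/4) * sqrt (real n)) + real n * exp (2 - (e0/8) * sqrt (real n))
      + real n * exp (0 - (e0/16) * sqrt (real n)) + h (p n)) \<longlonglongrightarrow> 0 + 0 + 0 + 0 + 0"
        by (intro tendsto_add lim1 hp) (use e0 in auto)
      thus ?thesis by (simp add: gam_def)
    qed
    have low: "\<forall>\<^sub>F n in sequentially. 1 - gam n \<le> measure_pmf.prob (Gnp n (p n)) (?Ev n)"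
      using good
    proof eventually_elim
      case (elim n)
      let ?X = "real n * p n"
      have mb: "1 - beta n \<le> measure_pmf.prob (Gnp n (p n))
         {G. \<exists>H \<subseteq> G. (\<forall>v<n. (1 - e0) * real n * p n \<le> real (degree H v)) \<and>
           e0 / 256 / (p n)^2 \<le> real (card {v. v < n \<and> \<not> in_triangle H v})}"
        unfolding beta_def by (rule main_bound_global) (use e0 elim in auto)
      have "{G. \<exists>H \<subseteq> G. (\<forall>v<n. (1 - e0) * real n * p n \<le> real (degree H v)) \<and>
           e0 / 256 / (p n)^2 \<le> real (card {v. v < n \<and> \<not> in_triangle H v})} \<subseteq> ?Ev n"
      proof safe
        fix G H assume "H \<subseteq> G" and d: "\<forall>v<n. (1 - e0) * real n * p n \<le> real (degree H v)"
          and t: "e0 / 256 / (p n)^2 \<le> real (card {v. v < n \<and> \<not> in_triangle H v})"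
        have "(1 - \<epsilon>) * real n * p n \<le> (1 - e0) * real n * p n"
          using e0 elim by (intro mult_right_mono) auto
        hence "\<forall>v<n. (1 - \<epsilon>) * real n * p n \<le> real (degree H v)" using d by (meson order_trans)
        moreover have "c / (p n)^2 = e0 / 256 / (p n)^2" by (simp add: c_def)
        ultimately show "\<exists>H \<subseteq> G. (\<forall>v<n. real (degree H v) \<ge> (1 - \<epsilon>) * real n * p n) \<and>
                   real (card {v. v < n \<and> \<not> in_triangle H v}) \<ge> c / (p n)\<^sup>2"
          using \<open>H \<subseteq> G\<close> t by auto
      qed
      hence mono: "measure_pmf.prob (Gnp n (p n))
         {G. \<exists>H \<subseteq> G. (\<forall>v<n. (1 - e0) * real n * p n \<le> real (degree H v)) \<and>
           e0 / 256 / (p n)^2 \<le> real (card {v. v < n \<and> \<not> in_triangle H v})}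
         \<le> measure_pmf.prob (Gnp n (p n)) (?Ev n)"
        by (intro measure_pmf.finite_measure_mono) auto
      have sq: "sqrt (real n) \<le> ?X" using elim by simp
      have b1: "exp (1 - (e0/4)^3 * ?X / 2) \<le> exp (1 - ((e0/4)^3/2) * sqrt (real n))"
        using exp_mono_sqrt[OF _ sq, of "(e0/4)^3/2" 1] e0 by simp
      have b2: "exp (- ?X / 4) \<le> exp (0 - (1/4) * sqrt (real n))"
        using exp_mono_sqrt[OF _ sq, of "1/4" 0] by simp
      have b3: "exp (2 - e0 * ?X / 8) \<le> exp (2 - (e0/8) * sqrt (real n))"
        using exp_mono_sqrt[OF _ sq, of "e0/8" 2] e0 by simp
      have b4: "exp (- e0 * ?X / 16) \<le> exp (0 - (e0/16) * sqrt (real n))"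
        using exp_mono_sqrt[OF _ sq, of "e0/16" 0] e0 by simp
      have "real n * (exp (1 - (e0/4)^3 * ?X / 2) + exp (- ?X / 4) + exp (2 - e0 * ?X / 8) + exp (- e0 * ?X / 16))
         \<le> real n * (exp (1 - ((e0/4)^3/2) * sqrt (real n)) + exp (0 - (1/4) * sqrt (real n))
           + exp (2 - (e0/8) * sqrt (real n)) + exp (0 - (e0/16) * sqrt (real n)))"
      proof (rule mult_left_mono)
        show "exp (1 - (e0/4)^3 * ?X / 2) + exp (- ?X / 4) + exp (2 - e0 * ?X / 8) + exp (- e0 * ?X / 16)
         \<le> exp (1 - ((e0/4)^3/2) * sqrt (real n)) + exp (0 - (1/4) * sqrt (real n))
           + exp (2 - (e0/8) * sqrt (real n)) + exp (0 - (e0/16) * sqrt (real n))"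
          using b1 b2 b3 b4 by linarith
      qed simp
      moreover have "(e0 / 256 / (p n)^2 + 1) * (4 * exp (3 - e0 / (128 * p n)) / e0) = h (p n)"
        by (simp add: h_def c_def field_simps)
      ultimately have "beta n \<le> gam n" unfolding beta_def gam_def by (simp add: algebra_simps)
      thus ?case using mb mono by linarith
    qed
    have up: "\<forall>\<^sub>F n in sequentially. measure_pmf.prob (Gnp n (p n)) (?Ev n) \<le> 1"
      by (simp add: measure_pmf.prob_le_1)
    have "(\<lambda>n. 1 - gam n) \<longlonglongrightarrow> 1 - 0" by (intro tendsto_diff tendsto_const gam0)
    hence l1: "(\<lambda>n. 1 - gam n) \<longlonglongrightarrow> 1" by simp
    have fin: "(\<lambda>n. measure_pmf.prob (Gnp n (p n)) (?Ev n)) \<longlonglongrightarrow> 1"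
      by (rule tendsto_sandwich[OF low up l1 tendsto_const])
    show "\<exists>c>0. (\<lambda>n. measure_pmf.prob (Gnp n (p n))
              {G. \<exists>H \<subseteq> G.
                   (\<forall>v<n. real (degree H v) \<ge> (1 - \<epsilon>) * real n * p n) \<and>
                   real (card {v. v < n \<and> \<not> in_triangle H v}) \<ge> c / (p n)\<^sup>2})
            \<longlonglongrightarrow> 1"
      by (rule exI[of _ c], rule conjI[OF c0 fin])
  qed simp
qed


end
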